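(* Let $V$ be a finite nonempty set, $c\in\mathbb{R}^{P_V}$, $\hat x$ a maximally specific partial function on $P_V$, $U\subseteq V$, $\hat x'=\hat x|_{P_U}$, $c'=c|_{P_U}$, and $ij\in P_V\setminus\operatorname{dom}(\hat x)$. Define $y^+\in\{0,1\}^{P_U}$ by $y^+_e=1$ if $e\notin\operatorname{dom}(\hat x')$ and $c_e\ge0$; $y^+_e=0$ if $e\notin\operatorname{dom}(\hat x')$ and $c_e<0$; $y^+_e=\hat x_e$ if $e\in\operatorname{dom}(\hat x')$. Let $\tau\in\{\tau^{y^+}_{\mathrm{out}},\tau^{y^+}_{\mathrm{in}},\tau^{y^+}_{\mathrm{bd}}\}$ with corresponding sets $P'_{01},P'_{10}$ given in the context (with $y=y^+$). If $y^+\in X_U[\hat x']$, then for every $x\in X_V[\hat x]$: $$\sum_{pq\in\delta(U)}c_{pq}\big(x_{pq}-\tau(x)_{pq}\big)\le\sum_{pq\in P'_{01}}c^-_{pq}+\sum_{pq\in P'_{10}}c^+_{pq}.$$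
   Context: For a finite set $W$, $P_W=\{pq\in W^2\mid p\neq q\}$ and $X_W$ is the set of $x\in\{0,1\}^{P_W}$ with $x_{pq}+x_{qr}-x_{pr}\le1$ for all pairwise distinct $p,q,r\in W$. A partial function $\tilde x$ on $P_W$ is a map from $\operatorname{dom}(\tilde x)\subseteq P_W$ to $\{0,1\}$, $\tilde x^{-1}(b)$ the pairs mapped to $b$, $X_W[\tilde x]=\{x\in X_W\mid x_{pq}=\tilde x_{pq}\ \forall pq\in\operatorname{dom}(\tilde x)\}$; convention $\tilde x_{aa}=1$, $x_{aa}=1$, $y_{aa}=1$ for all $a$. A pair is decided if it has the same value in all completions; $\tilde x$ is maximally specific if $X_W[\tilde x]\ne\emptyset$ and the decided pairs are exactly $\operatorname{dom}(\tilde x)$. $\hat x|_{P_U}$ has domain $\operatorname{dom}(\hat x)\cap P_U$. $\delta(U)=(U\times(V\setminus U))\cup((V\setminus U)\times U)$. For $y\in X_U[\hat x']$ and $x\in X_V[\hat x]$: $\tau^y_{\mathrm{out}}(x)_{pq}$ equals $y_{pq}$ on $P_U$; $0$ on $U\times(V\setminus U)$; on $(V\setminus U)\times U$, $1$ if $\exists r\in U: x_{pr}=1\wedge y_{rq}=1$ and $0$ otherwise; $x_{pq}$ on $P_{V\setminus U}$. $\tau^y_{\mathrm{in}}(x)_{pq}$ equals $y_{pq}$ on $P_U$; $0$ on $(V\setminus U)\times U$; on $U\times(V\setminus U)$, $1$ if $\exists r\in U: y_{pr}=1\wedge x_{rq}=1$ and $0$ otherwise; $x_{pq}$ on $P_{V\setminus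 U}$. $\tau^y_{\mathrm{bd}}(x)_{pq}$ equals $y_{pq}$ on $P_U$; $0$ on $\delta(U)$; $x_{pq}$ on $P_{V\setminus U}$. Sets: for $\tau^y_{\mathrm{out}}$: $P'_{01}=\{pq\in(V\setminus U)\times U\mid\exists r\in U:\hat x_{pr}\ne0\wedge y_{rq}=1\}\setminus\hat x^{-1}(1)$, $P'_{10}=(U\times(V\setminus U))\setminus\hat x^{-1}(0)$; for $\tau^y_{\mathrm{in}}$: $P'_{01}=\{pq\in U\times(V\setminus U)\mid\exists r\in U: y_{pr}=1\wedge\hat x_{rq}\ne0\}\setminus\hat x^{-1}(1)$, $P'_{10}=((V\setminus U)\times U)\setminus\hat x^{-1}(0)$; for $\tau^y_{\mathrm{bd}}$: $P'_{01}=\emptyset$, $P'_{10}=\delta(U)\setminus\hat x^{-1}(0)$. For real $a$: $a^+=\max(a,0)$, $a^-=\max(-a,0)$. *)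

theory Defs
  imports Main "HOL-Library.Extended_Real"
begin

definition PW :: "'a set \<Rightarrow> ('a \<times> 'a) set" where
  "PW W = {(p, q). p \<in> W \<and> q \<in> W \<and> p \<noteq> q}"

definition XW :: "'a set \<Rightarrow> (('a \<times> 'a) \<Rightarrow> real) set" where
  "XW W = {x. (\<forall>e\<in>PW W. x e \<in> {0, 1}) \<and> (\<forall>e. e \<notin> PW W \<longrightarrow> x e = 0) \<and>
     (\<forall>p\<in>W. \<forall>q\<in>W. \<forall>r\<in>W. p \<noteq> q \<and> q \<noteq> r \<and> p \<noteq> r \<longrightarrow>
        x (p, q) + x (q, r) - x (p, r) \<le> 1)}"

definition XWp :: "'a set \<Rightarrow> (('a \<times> 'a) \<rightharpoonup> real) \<Rightarrow> (('a \<times> 'a) \<Rightarrow> real) set" where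
  "XWp W xt = {x \<in> XW W. \<forall>e \<in> dom xt. xt e = Some (x e)}"

definition decided :: "'a set \<Rightarrow> (('a \<times> 'a) \<rightharpoonup> real) \<Rightarrow> ('a \<times> 'a) \<Rightarrow> bool" where
  "decided W xt e \<longleftrightarrow> (\<forall>x\<in>XWp W xt. \<forall>x'\<in>XWp W xt. x e = x' e)"

definition maximally_specific :: "'a set \<Rightarrow> (('a \<times> 'a) \<rightharpoonup> real) \<Rightarrow> bool" where
  "maximally_specific W xt \<longleftrightarrow> XWp W xt \<noteq> {} \<and> {e \<in> PW W. decided W xt e} = dom xt"

definition delta :: "'a set \<Rightarrow> 'a set \<Rightarrow> ('a \<times> 'a) set" where
  "delta V U = (U \<times> (V - U)) \<union> ((V - U) \<times> U)"

datatype tau_kind = Out | In | Bd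

text \<open>The maps tau^y_out, tau^y_in, tau^y_bd on X_V (values on P_V, 0 elsewhere).
  The convention y_aa = 1 is made explicit through the disjuncts r = q / r = p.\<close>
definition tau :: "tau_kind \<Rightarrow> 'a set \<Rightarrow> 'a set \<Rightarrow> (('a \<times> 'a) \<Rightarrow> real)
    \<Rightarrow> (('a \<times> 'a) \<Rightarrow> real) \<Rightarrow> ('a \<times> 'a) \<Rightarrow> real" where
  "tau k V U y x e = (case e of (p, q) \<Rightarrow>
     if (p, q) \<notin> PW V then 0
     else if p \<in> U \<and> q \<in> U then y (p, q)
     else if p \<notin> U \<and> q \<notin> U then x (p, q)
     else if p \<in> U then
       (case k of
          Out \<Rightarrow> 0
        | In \<Rightarrow> (if \<exists>r\<in>U. (r = p \<or> y (p, r) = 1) \<and> x (r, q) = 1 then 1 else 0)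
        | Bd \<Rightarrow> 0)
     else
       (case k of
          Out \<Rightarrow> (if \<exists>r\<in>U. x (p, r) = 1 \<and> (r = q \<or> y (r, q) = 1) then 1 else 0)
        | In \<Rightarrow> 0
        | Bd \<Rightarrow> 0))"

definition P01 :: "tau_kind \<Rightarrow> 'a set \<Rightarrow> 'a set \<Rightarrow> (('a \<times> 'a) \<rightharpoonup> real)
    \<Rightarrow> (('a \<times> 'a) \<Rightarrow> real) \<Rightarrow> ('a \<times> 'a) set" where
  "P01 k V U xh y = (case k of
      Out \<Rightarrow> {(p, q) \<in> (V - U) \<times> U. \<exists>r\<in>U. xh (p, r) \<noteq> Some 0 \<and> (r = q \<or> y (r, q) = 1)}
               - {e. xh e = Some 1}
    | In \<Rightarrow> {(p, q) \<in> U \<times> (V - U). \<exists>r\<in>U. (r = p \<or> y (p, r) = 1) \<and> xh (r, q) \<noteq> Some 0}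
               - {e. xh e = Some 1}
    | Bd \<Rightarrow> {})"

definition P10 :: "tau_kind \<Rightarrow> 'a set \<Rightarrow> 'a set \<Rightarrow> (('a \<times> 'a) \<rightharpoonup> real) \<Rightarrow> ('a \<times> 'a) set" where
  "P10 k V U xh = (case k of
      Out \<Rightarrow> (U \<times> (V - U)) - {e. xh e = Some 0}
    | In \<Rightarrow> ((V - U) \<times> U) - {e. xh e = Some 0}
    | Bd \<Rightarrow> delta V U - {e. xh e = Some 0})"

definition yplus :: "'a set \<Rightarrow> (('a \<times> 'a) \<rightharpoonup> real) \<Rightarrow> (('a \<times> 'a) \<Rightarrow> real)
    \<Rightarrow> ('a \<times> 'a) \<Rightarrow> real" where
  "yplus U xh' c e = (if e \<notin> PW U then 0
      else (case xh' e of None \<Rightarrow> (if c e \<ge> 0 then 1 else 0) | Some v \<Rightarrow> v))"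

definition pos_part :: "real \<Rightarrow> real" where "pos_part a = max a 0"
definition neg_part :: "real \<Rightarrow> real" where "neg_part a = max (- a) 0"

end

theory Submission
  imports Defs
begin

lemma xdom:
  assumes "x \<in> XWp V xh" "xh e = Some v"
  shows "x e = v"
proof -
  have "e \<in> dom xh" using assms(2) by auto
  then have "xh e = Some (x e)" using assms(1) unfolding XWp_def by blast
  then show ?thesis using assms(2) by simp
qed

lemma x01:
  assumes "x \<in> XWp V xh" "e \<in> PW V"
  shows "x e = 0 \<or> x e = 1"
  using assms unfolding XWp_def XW_def by auto

lemma pointwise:
  assumes x: "x \<in> XWp V xh" and U: "U \<subseteq> V" and e: "e \<in> delta V U"
  shows "c e * (x e - tau k V U y x e) \<le>
     (if e \<in> P01 k V U xh y then neg_part (c e) else 0) + (if e \<in> P10 k V U xh then pos_part (c e) else 0)"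
proof -
  obtain p q where pq: "e = (p, q)" by (cases e)
  have ePW: "(p, q) \<in> PW V" using e U unfolding delta_def PW_def pq by auto
  have x01e: "x (p,q) = 0 \<or> x (p,q) = 1" using x01[OF x ePW] .
  have np: "neg_part a \<ge> 0" "pos_part a \<ge> 0" "- a \<le> neg_part a" "a \<le> pos_part a" for a
    unfolding neg_part_def pos_part_def by auto
  have n0: "xh (p,q) \<noteq> Some 0" if "x (p,q) = 1" using xdom[OF x, of "(p,q)" 0] that by auto
  have n1: "xh (p,q) \<noteq> Some 1" if "x (p,q) = 0" using xdom[OF x, of "(p,q)" 1] that by auto
  have nr: "xh (a,b) \<noteq> Some 0" if "x (a,b) = 1" for a b using xdom[OF x, of "(a,b)" 0] that by auto
  have side: "(p \<in> U \<and> q \<in> V - U) \<or> (p \<in> V - U \<and> q \<in> U)" using e unfolding delta_def pq by auto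
  show ?thesis
  proof (cases k)
    case Out
    show ?thesis
    proof (cases "p \<in> U")
      case True
      then have t: "tau k V U y x e = 0" using side ePW Out unfolding tau_def pq by auto
      have "e \<in> P10 k V U xh" if "x (p,q) = 1" using n0[OF that] side True Out unfolding P10_def pq by auto
      then show ?thesis using x01e t np[of "c e"] pq by auto
    next
      case False
      then have pU: "p \<in> V - U" "q \<in> U" using side by auto
      have t: "tau k V U y x e = (if \<exists>r\<in>U. x (p, r) = 1 \<and> (r = q \<or> y (r, q) = 1) then 1 else 0)"
        using pU ePW Out unfolding tau_def pq by auto
      show ?thesis
      proof (cases "\<exists>r\<in>U. x (p, r) = 1 \<and> (r = q \<or> y (r, q) = 1)")
        case True
        then obtain r where r: "r \<in> U" "x (p, r) = 1" "r = q \<or> y (r, q) = 1" by blast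
        have "e \<in> P01 k V U xh y" if "x (p,q) = 0"
          using n1[OF that] nr[OF r(2)] r pU Out unfolding P01_def pq by auto
        then show ?thesis using x01e t True np[of "c e"] pq by auto
      next
        case False
        then have "x (p,q) = 0" using x01e pU by auto
        then show ?thesis using t False np[of "c e"] pq by auto
      qed
    qed
  next
    case In
    show ?thesis
    proof (cases "q \<in> U")
      case True
      then have pU: "p \<in> V - U" using side by auto
      then have t: "tau k V U y x e = 0" using True side ePW In unfolding tau_def pq by auto
      have "e \<in> P10 k V U xh" if "x (p,q) = 1" using n0[OF that] pU True In unfolding P10_def pq by auto
      then show ?thesis using x01e t np[of "c e"] pq by auto
    next
      case False
      then have pU: "p \<in> U" "q \<in> V - U" using side by auto
      have t: "tau k V U y x e = (if \<exists>r\<in>U. (r = p \<or> y (p, r) = 1) \<and> x (r, q) = 1 then 1 else 0)"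
        using pU ePW In unfolding tau_def pq by auto
      show ?thesis
      proof (cases "\<exists>r\<in>U. (r = p \<or> y (p, r) = 1) \<and> x (r, q) = 1")
        case True
        then obtain r where r: "r \<in> U" "x (r, q) = 1" "r = p \<or> y (p, r) = 1" by blast
        have "e \<in> P01 k V U xh y" if "x (p,q) = 0"
          using n1[OF that] nr[OF r(2)] r pU In unfolding P01_def pq by auto
        then show ?thesis using x01e t True np[of "c e"] pq by auto
      next
        case False
        then have "x (p,q) = 0" using x01e pU by auto
        then show ?thesis using t False np[of "c e"] pq by auto
      qed
    qed
  next
    case Bd
    then have t: "tau k V U y x e = 0" using side ePW unfolding tau_def pq by auto
    have "e \<in> P10 k V U xh" if "x (p,q) = 1" using n0[OF that] e Bd unfolding P10_def pq by auto
    then show ?thesis using x01e t np[of "c e"] pq by auto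
  qed
qed

lemma subsets: "P01 k V U xh y \<subseteq> delta V U" "P10 k V U xh \<subseteq> delta V U"
  unfolding P01_def P10_def delta_def by (cases k; auto)+

theorem corollary7p6:
  fixes V U :: "'a set" and c :: "('a \<times> 'a) \<Rightarrow> real"
    and xh :: "('a \<times> 'a) \<rightharpoonup> real" and i j :: 'a and k :: tau_kind
  assumes "finite V" and "V \<noteq> {}"
    and "maximally_specific V xh"
    and "U \<subseteq> V"
    and "(i, j) \<in> PW V - dom xh"
    and "yplus U (xh |` PW U) c \<in> XWp U (xh |` PW U)"
  shows "\<forall>x \<in> XWp V xh.
      (\<Sum>e\<in>delta V U. c e * (x e - tau k V U (yplus U (xh |` PW U) c) x e))
        \<le> (\<Sum>e\<in>P01 k V U xh (yplus U (xh |` PW U) c). neg_part (c e))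
          + (\<Sum>e\<in>P10 k V U xh. pos_part (c e))"
proof
  fix x assume x: "x \<in> XWp V xh"
  define y where "y = yplus U (xh |` PW U) c"
  have fin: "finite (delta V U)" using assms(1,4) finite_subset unfolding delta_def by blast
  have "(\<Sum>e\<in>delta V U. c e * (x e - tau k V U y x e)) \<le>
     (\<Sum>e\<in>delta V U. (if e \<in> P01 k V U xh y then neg_part (c e) else 0) + (if e \<in> P10 k V U xh then pos_part (c e) else 0))"
    by (rule sum_mono) (rule pointwise[OF x assms(4)])
  also have "\<dots> = (\<Sum>e\<in>P01 k V U xh y. neg_part (c e)) + (\<Sum>e\<in>P10 k V U xh. pos_part (c e))"
  proof -
    have a: "(\<Sum>e\<in>delta V U. if e \<in> P01 k V U xh y then neg_part (c e) else 0) = (\<Sum>e\<in>P01 k V U xh y. neg_part (c e))"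
      using sum.inter_restrict[OF fin, of "\<lambda>e. neg_part (c e)" "P01 k V U xh y"] subsets(1)[of k V U xh y]
      by (simp add: Int_absorb1 Int_absorb2)
    have b: "(\<Sum>e\<in>delta V U. if e \<in> P10 k V U xh then pos_part (c e) else 0) = (\<Sum>e\<in>P10 k V U xh. pos_part (c e))"
      using sum.inter_restrict[OF fin, of "\<lambda>e. pos_part (c e)" "P10 k V U xh"] subsets(2)[of k V U xh]
      by (simp add: Int_absorb1 Int_absorb2)
    show ?thesis unfolding sum.distrib a b ..
  qed
  finally show "(\<Sum>e\<in>delta V U. c e * (x e - tau k V U (yplus U (xh |` PW U) c) x e))
        \<le> (\<Sum>e\<in>P01 k V U xh (yplus U (xh |` PW U) c). neg_part (c e))
          + (\<Sum>e\<in>P10 k V U xh. pos_part (c e))" unfolding y_def .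
qed

end
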